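(* Let $n\ge 2$ and $k\ge 1$. If there exists a set of $k$ Gozinta Boxes in dimension $n$, then there exists a set of $k$ Gozinta Boxes in dimension $n-1$.
   Context: An $n$-dimensional box $A$ has closed side lengths $a_1\le\dots\le a_n$ (positive reals). A state of $A$ is either closed or expanded along one side $i$: $a_i$ is replaced by $a_i'$ with $a_i\le a_i'\le 2a_i$, other sides unchanged (only one side can expand). The dimension vector of a state is its side lengths sorted non-decreasingly. A box in some state fits inside another box in some state if each coordinate of the outer one's dimension vector is strictly larger than the corresponding coordinate of the inner one's. An order $X_1,\dots,X_k$ (innermost to outermost) is a possible arrangement if each box can be given a state so that $X_j$ fits inside $X_{j+1}$ for all $j$; states may differ between arrangements. A set of $k$ Gozinta Boxes is a collection of $k$ boxes $A_1,\dots,A_k$ (of the same dimension) such that both the natural order $A_1,\dots,A_k$ and the reverse order $A_k,\dots,A_1$ are possible arrangements. *)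

theory Defs
  imports Complex_Main
begin

definition is_box :: "nat \<Rightarrow> real list \<Rightarrow> bool" where
  "is_box n a \<longleftrightarrow> length a = n \<and> (\<forall>x\<in>set a. x > 0) \<and> sorted a"

definition box_states :: "real list \<Rightarrow> real list set" where
  "box_states a = {a} \<union> {a[i := t] | i t. i < length a \<and> a ! i \<le> t \<and> t \<le> 2 * a ! i}"

definition dim_vec :: "real list \<Rightarrow> real list" where
  "dim_vec s = sort s"

definition fits_inside :: "real list \<Rightarrow> real list \<Rightarrow> bool" where
  "fits_inside s t \<longleftrightarrow> length s = length t \<and>
     (\<forall>i < length s. dim_vec s ! i < dim_vec t ! i)"

text \<open>An order X_1,...,X_k (innermost first) is a possible arrangement.\<close>
definition possible_arrangement :: "real list list \<Rightarrow> bool" where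
  "possible_arrangement Xs \<longleftrightarrow>
     (\<exists>S. length S = length Xs \<and> (\<forall>j < length Xs. S ! j \<in> box_states (Xs ! j)) \<and>
          (\<forall>j. Suc j < length Xs \<longrightarrow> fits_inside (S ! j) (S ! Suc j)))"

definition gozinta :: "nat \<Rightarrow> nat \<Rightarrow> real list list \<Rightarrow> bool" where
  "gozinta n k A \<longleftrightarrow> length A = k \<and> (\<forall>a\<in>set A. is_box n a) \<and>
     possible_arrangement A \<and> possible_arrangement (rev A)"

end

theory Submission
  imports Defs "HOL-Library.Multiset"
begin

lemma sort_cons_min:
  fixes m :: real
  assumes "mset s = mset (m # sb)" "\<forall>x\<in>set sb. m \<le> x"
  shows "tl (sort s) = sort sb"
proof -
  have "sort s = sort (m # sb)" using assms(1)
    using properties_for_sort[of "sort (m # sb)" s] assms(1) by (simp add: sorted_insort)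
  also have "\<dots> = m # sort sb" using assms(2) by (simp add: insort_is_Cons)
  finally show ?thesis by simp
qed

lemma box_states_len: "s \<in> box_states a \<Longrightarrow> length s = length a"
  unfolding box_states_def by auto

lemma key:
  assumes box: "is_box n a" and n: "n \<ge> 2" and s: "s \<in> box_states a"
  shows "\<exists>sb \<in> box_states (tl a). tl (sort s) = sort sb"
proof -
  have len: "length a = n" and pos: "\<forall>x\<in>set a. x > 0" and so: "sorted a"
    using box unfolding is_box_def by auto
  obtain a0 a1 r where aeq: "a = a0 # a1 # r" using len n
    by (metis One_nat_def Suc_1 Suc_le_length_iff le_trans lessI less_imp_le_nat)
  have s01: "a0 \<le> a1" "\<forall>x\<in>set r. a1 \<le> x" "\<forall>x\<in>set r. a0 \<le> x" using so aeq by auto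
  have a0pos: "a0 > 0" using pos aeq by auto
  from s consider "s = a" | i t where "s = a[i := t]" "i < length a" "a ! i \<le> t" "t \<le> 2 * a ! i"
    unfolding box_states_def by blast
  then show ?thesis
  proof cases
    case 1
    have "tl (sort s) = sort (a1 # r)"
      by (rule sort_cons_min[where m=a0]) (use 1 aeq s01 in auto)
    moreover have "a1 # r \<in> box_states (tl a)" using aeq unfolding box_states_def by auto
    ultimately show ?thesis by blast
  next
    case (2 i t)
    show ?thesis
    proof (cases i)
      case 0
      show ?thesis
      proof (cases "t \<le> a1")
        case True
        have "tl (sort s) = sort (a1 # r)"
          by (rule sort_cons_min[where m=t]) (use 2 0 aeq s01 True in auto)
        moreover have "a1 # r \<in> box_states (tl a)" using aeq unfolding box_states_def by auto
        ultimately show ?thesis by blast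
      next
        case False
        have "tl (sort s) = sort (t # r)"
          by (rule sort_cons_min[where m=a1]) (use 2 0 aeq s01 False in auto)
        moreover have "t # r \<in> box_states (tl a)"
        proof -
          have "t # r = (a1 # r)[0 := t]" by simp
          moreover have "t \<le> 2 * a1" using 2 0 aeq s01 by auto
          ultimately show ?thesis using aeq False unfolding box_states_def by force
        qed
        ultimately show ?thesis by blast
      qed
    next
      case (Suc j)
      have seq: "s = a0 # (a1 # r)[j := t]" using 2 Suc aeq by simp
      have jl: "j < length (a1 # r)" using 2 Suc aeq by simp
      have tge: "a0 \<le> t"
      proof -
        have "a ! i \<in> set a" using 2 by simp
        hence "a0 \<le> a ! i" using aeq s01 by auto
        thus ?thesis using 2 by simp
      qed
      have "tl (sort s) = sort ((a1 # r)[j := t])"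
      proof (rule sort_cons_min[where m=a0])
        show "mset s = mset (a0 # (a1 # r)[j := t])" using seq by simp
        show "\<forall>x\<in>set ((a1 # r)[j := t]). a0 \<le> x"
          using set_update_subset_insert[of "a1 # r" j t] s01 tge by auto
      qed
      moreover have "(a1 # r)[j := t] \<in> box_states (tl a)"
        using 2 Suc aeq jl unfolding box_states_def by force
      ultimately show ?thesis by blast
    qed
  qed
qed

lemma arr:
  assumes all: "\<forall>a\<in>set Xs. is_box n a" and n: "n \<ge> 2" and pa: "possible_arrangement Xs"
  shows "possible_arrangement (map tl Xs)"
proof -
  obtain S where S: "length S = length Xs" "\<forall>j < length Xs. S ! j \<in> box_states (Xs ! j)"
    "\<forall>j. Suc j < length Xs \<longrightarrow> fits_inside (S ! j) (S ! Suc j)"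
    using pa unfolding possible_arrangement_def by blast
  have "\<forall>j. \<exists>sb. j < length Xs \<longrightarrow> sb \<in> box_states (tl (Xs ! j)) \<and> tl (sort (S ! j)) = sort sb"
    using key all n S(2) by (meson nth_mem)
  then obtain g where g: "\<And>j. j < length Xs \<Longrightarrow> g j \<in> box_states (tl (Xs ! j)) \<and> tl (sort (S ! j)) = sort (g j)"
    by metis
  have lenS: "\<And>j. j < length Xs \<Longrightarrow> length (S ! j) = n"
    using S(2) box_states_len all unfolding is_box_def by (metis nth_mem)
  have leng: "\<And>j. j < length Xs \<Longrightarrow> length (g j) = n - 1"
    using g box_states_len all unfolding is_box_def by (metis length_tl nth_mem)
  show ?thesis unfolding possible_arrangement_def
  proof (intro exI[of _ "map g [0..<length Xs]"] conjI allI impI)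
    show "length (map g [0..<length Xs]) = length (map tl Xs)" by simp
  next
    fix j assume "j < length (map tl Xs)"
    thus "map g [0..<length Xs] ! j \<in> box_states (map tl Xs ! j)" using g by simp
  next
    fix j assume j: "Suc j < length (map tl Xs)"
    hence j1: "Suc j < length Xs" "j < length Xs" by auto
    show "fits_inside (map g [0..<length Xs] ! j) (map g [0..<length Xs] ! Suc j)"
      unfolding fits_inside_def dim_vec_def
    proof (intro conjI allI impI)
      show "length (map g [0..<length Xs] ! j) = length (map g [0..<length Xs] ! Suc j)"
        using j1 leng by simp
    next
      fix i assume "i < length (map g [0..<length Xs] ! j)"
      hence i: "Suc i < n" using j1 leng by simp
      have f: "fits_inside (S ! j) (S ! Suc j)" using S(3) j1 by blast
      have "sort (S ! j) ! Suc i < sort (S ! Suc j) ! Suc i"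
        using f i lenS j1 unfolding fits_inside_def dim_vec_def by auto
      moreover have "sort (g j) ! i = sort (S ! j) ! Suc i"
        proof -
        have "sort (g j) = tl (sort (S ! j))" using g[OF j1(2)] by simp
        moreover have "i < length (tl (sort (S ! j)))" using lenS[OF j1(2)] i by simp
        ultimately show ?thesis by (simp add: nth_tl)
      qed
      moreover have "sort (g (Suc j)) ! i = sort (S ! Suc j) ! Suc i"
        proof -
        have "sort (g (Suc j)) = tl (sort (S ! Suc j))" using g[OF j1(1)] by simp
        moreover have "i < length (tl (sort (S ! Suc j)))" using lenS[OF j1(1)] i by simp
        ultimately show ?thesis by (simp add: nth_tl)
      qed
      ultimately show "sort (map g [0..<length Xs] ! j) ! i < sort (map g [0..<length Xs] ! Suc j) ! i"
        using j1 by simp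
    qed
  qed
qed

theorem proposition15:
  fixes n k :: nat
  assumes "n \<ge> 2" and "k \<ge> 1"
    and "\<exists>A. gozinta n k A"
  shows "\<exists>B. gozinta (n - 1) k B"
proof -
  obtain A where A: "gozinta n k A" using assms by blast
  have boxes: "\<forall>a\<in>set A. is_box n a" using A unfolding gozinta_def by blast
  have "gozinta (n - 1) k (map tl A)"
    unfolding gozinta_def
  proof (intro conjI)
    show "length (map tl A) = k" using A unfolding gozinta_def by simp
    show "\<forall>a\<in>set (map tl A). is_box (n - 1) a"
    proof
      fix b assume "b \<in> set (map tl A)"
      then obtain a where a: "a \<in> set A" "b = tl a" by auto
      have "set (tl a) \<subseteq> set a" by (cases a) auto
      thus "is_box (n - 1) b" using boxes a unfolding is_box_def by (auto simp: sorted_tl)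
    qed
    show "possible_arrangement (map tl A)"
      using arr boxes assms(1) A unfolding gozinta_def by blast
    show "possible_arrangement (rev (map tl A))"
      using arr[of "rev A" n] boxes assms(1) A unfolding gozinta_def by (simp add: rev_map)
  qed
  thus ?thesis by blast
qed

end
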